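(* Let $\lambda$ be an infinite cardinal and let $(\mathscr T,\bar{\mathbf I})$ be a $\lambda^+$-complete tagged tree. Suppose $\lim(\mathscr T)=\bigcup_{\alpha<\lambda}\mathbb B_\alpha$, where each $\mathbb B_\alpha$ is a Borel subset of $\lim(\mathscr T)$. Then there are $\alpha<\lambda$ and a tree $\mathscr T^\dagger$ with $(\mathscr T,\bar{\mathbf I})\le^*(\mathscr T^\dagger,\bar{\mathbf I})$ and $\lim(\mathscr T^\dagger)\subseteq\mathbb B_\alpha$. In particular, if $\mathbf H$ is a function on $\lim(\mathscr T)$ with $|\mathrm{Rang}(\mathbf H)|\le\lambda$ and every fiber $\mathbf H^{-1}(\{x\})$ Borel, then there is $\mathscr T^\dagger$ with $(\mathscr T,\bar{\mathbf I})\le^*(\mathscr T^\dagger,\bar{\mathbf I})$ such that $\mathbf H$ is constant on $\lim(\mathscr T^\dagger)$.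
   Context: A tree is a nonempty set $\mathscr T$ of finite sequences of ordinals, closed under initial segments, such that every $\eta\in\mathscr T$ has at least one immediate successor in $\mathscr T$; $\mathrm{Succ}_{\mathscr T}(\eta)=\{\eta^\frown\langle\alpha\rangle:\eta^\frown\langle\alpha\rangle\in\mathscr T\}$. $\lim(\mathscr T)$ is the set of $\omega$-sequences of ordinals all of whose finite initial segments lie in $\mathscr T$, with the topology whose basic open sets are $\{\nu\in\lim(\mathscr T):\eta\triangleleft\nu\}$ for $\eta\in\mathscr T$; "Borel" refers to this topology. An ideal on a set $X$ is a family of subsets of $X$ containing all singletons, closed under subsets and finite unions, and not containing $X$; it is $\mu$-complete if closed under unions of fewer than $\mu$ members. A tagged tree is a pair $(\mathscr T,\bar{\mathbf I})$ where $\mathscr T$ is a tree and $\bar{\mathbf I}$ assigns to some (possibly all) $\eta\in\mathscr T$ an ideal $\mathbf I_\eta$ on a set $\mathrm{Dom}(\mathbf I_\eta)\supseteq\mathrm{Succ}_{\mathscr T}(\eta)$. The tagged tree is $\mu$-complete if every defined $\mathbf I_\eta$ ($\eta\in\mathscr T$) is $\mu$-complete. $\eta\in\mathscr T$ is a splitting point of $(\mathscr T,\bar{\mathbf I})$ if $\mathbf I_\eta$ is defined and $\mathrm{Succ}_{\mathscr T}(\eta)\notin\mathbf I_\eta$. For trees $\mathscr T'\subseteq\mathscr T$, $(\mathscr T,\bar{\mathbf I})\le^*(\mathscr T',\bar{\mathbf I})$ means: for every $\eta\in\mathscr T'$ which is a splitting point of $(\mathscr T,\bar{\mathbf I})$ we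 have $\mathrm{Succ}_{\mathscr T'}(\eta)\notin\mathbf I_\eta$ (so the splitting points of $(\mathscr T',\bar{\mathbf I})$ are exactly the splitting points of $(\mathscr T,\bar{\mathbf I})$ lying in $\mathscr T'$). *)

theory Defs
  imports "HOL-Analysis.Sigma_Algebra"
begin

text \<open>Finite sequences are lists; \<omega>-sequences are functions nat => 'a.
  The ordinals are abstracted to an arbitrary type 'a.\<close>

definition is_tree :: "'a list set \<Rightarrow> bool" where
  "is_tree T \<longleftrightarrow> T \<noteq> {} \<and> (\<forall>\<eta>\<in>T. \<forall>n. take n \<eta> \<in> T)
     \<and> (\<forall>\<eta>\<in>T. \<exists>a. \<eta> @ [a] \<in> T)"

definition Succ :: "'a list set \<Rightarrow> 'a list \<Rightarrow> 'a list set" where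
  "Succ T \<eta> = {\<nu>. \<exists>a. \<nu> = \<eta> @ [a] \<and> \<nu> \<in> T}"

definition init_seg :: "'a list \<Rightarrow> (nat \<Rightarrow> 'a) \<Rightarrow> bool" where
  "init_seg \<eta> \<nu> \<longleftrightarrow> map \<nu> [0..<length \<eta>] = \<eta>"

definition lim :: "'a list set \<Rightarrow> (nat \<Rightarrow> 'a) set" where
  "lim T = {\<nu>. \<forall>n. map \<nu> [0..<n] \<in> T}"

definition basic_open :: "'a list set \<Rightarrow> 'a list \<Rightarrow> (nat \<Rightarrow> 'a) set" where
  "basic_open T \<eta> = {\<nu> \<in> lim T. init_seg \<eta> \<nu>}"

definition open_lim :: "'a list set \<Rightarrow> (nat \<Rightarrow> 'a) set \<Rightarrow> bool" where
  "open_lim T U \<longleftrightarrow> (\<exists>S \<subseteq> T. U = (\<Union>\<eta>\<in>S. basic_open T \<eta>))"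

definition borel_lim :: "'a list set \<Rightarrow> (nat \<Rightarrow> 'a) set \<Rightarrow> bool" where
  "borel_lim T B \<longleftrightarrow> B \<in> sigma_sets (lim T) {U. open_lim T U}"

definition is_ideal :: "'b set \<Rightarrow> 'b set set \<Rightarrow> bool" where
  "is_ideal X I \<longleftrightarrow> I \<subseteq> Pow X \<and> (\<forall>x\<in>X. {x} \<in> I)
     \<and> (\<forall>A\<in>I. \<forall>B. B \<subseteq> A \<longrightarrow> B \<in> I)
     \<and> (\<forall>A\<in>I. \<forall>B\<in>I. A \<union> B \<in> I) \<and> X \<notin> I"

definition card_le :: "'b set \<Rightarrow> 'c set \<Rightarrow> bool" where
  "card_le A L \<longleftrightarrow> (\<exists>f. inj_on f A \<and> f ` A \<subseteq> L)"

text \<open>lambda^+-complete where lambda = |L|: closed under unions of at most |L| members.\<close>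
definition complete_plus :: "'c set \<Rightarrow> 'b set set \<Rightarrow> bool" where
  "complete_plus L I \<longleftrightarrow> (\<forall>F \<subseteq> I. card_le F L \<longrightarrow> \<Union>F \<in> I)"

text \<open>A tag assignment: Ibar eta = Some (Dom, I) when I_eta is defined (an ideal on Dom).\<close>
type_synonym 'a tags = "'a list \<Rightarrow> ('a list set \<times> 'a list set set) option"

definition tagged_tree :: "'a list set \<Rightarrow> 'a tags \<Rightarrow> bool" where
  "tagged_tree T Ib \<longleftrightarrow> is_tree T \<and>
     (\<forall>\<eta>\<in>T. \<forall>D I. Ib \<eta> = Some (D, I) \<longrightarrow> is_ideal D I \<and> Succ T \<eta> \<subseteq> D)"

definition tagged_complete :: "'c set \<Rightarrow> 'a list set \<Rightarrow> 'a tags \<Rightarrow> bool" where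
  "tagged_complete L T Ib \<longleftrightarrow>
     (\<forall>\<eta>\<in>T. \<forall>D I. Ib \<eta> = Some (D, I) \<longrightarrow> complete_plus L I)"

definition splitting :: "'a list set \<Rightarrow> 'a tags \<Rightarrow> 'a list \<Rightarrow> bool" where
  "splitting T Ib \<eta> \<longleftrightarrow> \<eta> \<in> T \<and> (\<exists>D I. Ib \<eta> = Some (D, I) \<and> Succ T \<eta> \<notin> I)"

definition le_star :: "'a list set \<Rightarrow> 'a tags \<Rightarrow> 'a list set \<Rightarrow> bool" where
  "le_star T Ib T' \<longleftrightarrow> T' \<subseteq> T \<and>
     (\<forall>\<eta>\<in>T'. splitting T Ib \<eta> \<longrightarrow> Succ T' \<eta> \<notin> snd (the (Ib \<eta>)))"

end

theory Submission
  imports Defs "HOL-Library.Nat_Bijection"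
begin



abbreviation pre :: "(nat \<Rightarrow> 'x) \<Rightarrow> nat \<Rightarrow> 'x list" where
  "pre \<nu> n \<equiv> map \<nu> [0..<n]"

lemma pre_Suc: "pre \<nu> (Suc n) = pre \<nu> n @ [\<nu> n]" by simp

lemma take_pre: "m \<le> n \<Longrightarrow> take m (pre \<nu> n) = pre \<nu> m"
  by (simp add: take_map)

lemma nth_pre: "i < n \<Longrightarrow> pre \<nu> n ! i = \<nu> i" by simp

lemma tree_take: "is_tree T \<Longrightarrow> \<eta> \<in> T \<Longrightarrow> take n \<eta> \<in> T"
  unfolding is_tree_def by blast

lemma tree_Nil: "is_tree T \<Longrightarrow> [] \<in> T"
  unfolding is_tree_def by (metis all_not_in_conv take_0)

lemma Succ_sub: "Succ T \<eta> \<subseteq> T" unfolding Succ_def by auto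

lemma Succ_ne: "is_tree T \<Longrightarrow> \<eta> \<in> T \<Longrightarrow> Succ T \<eta> \<noteq> {}"
  unfolding is_tree_def Succ_def by blast

lemma splittingD:
  assumes "tagged_tree T Ib" "splitting T Ib \<eta>"
  obtains D I where "Ib \<eta> = Some (D, I)" "is_ideal D I" "Succ T \<eta> \<subseteq> D"
    "Succ T \<eta> \<notin> I" "snd (the (Ib \<eta>)) = I" "\<eta> \<in> T"
  using assms unfolding splitting_def tagged_tree_def by force

lemma ideal_down: "is_ideal D I \<Longrightarrow> A \<in> I \<Longrightarrow> B \<subseteq> A \<Longrightarrow> B \<in> I"
  unfolding is_ideal_def by blast

lemma ideal_un: "is_ideal D I \<Longrightarrow> A \<in> I \<Longrightarrow> B \<in> I \<Longrightarrow> A \<union> B \<in> I"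
  unfolding is_ideal_def by blast

lemma split_empty:
  assumes "tagged_tree T Ib" "splitting T Ib \<eta>"
  shows "{} \<in> snd (the (Ib \<eta>))"
proof -
  obtain D I where *: "is_ideal D I" "Succ T \<eta> \<subseteq> D" "snd (the (Ib \<eta>)) = I" "\<eta> \<in> T"
    using splittingD[OF assms] by metis
  have "is_tree T" using assms(1) unfolding tagged_tree_def by blast
  then obtain x where "x \<in> Succ T \<eta>" using Succ_ne * by blast
  then have "{x} \<in> I" using * unfolding is_ideal_def by blast
  then show ?thesis using * ideal_down[of D I "{x}" "{}"] by simp
qed

lemma split_pos:
  assumes "tagged_tree T Ib" "splitting T Ib \<eta>" "E \<in> snd (the (Ib \<eta>))"
  shows "Succ T \<eta> - E \<notin> snd (the (Ib \<eta>))"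
proof
  assume a: "Succ T \<eta> - E \<in> snd (the (Ib \<eta>))"
  obtain D I where *: "is_ideal D I" "Succ T \<eta> \<notin> I" "snd (the (Ib \<eta>)) = I"
    using splittingD[OF assms(1,2)] by metis
  have "(Succ T \<eta> - E) \<union> E \<in> I" using ideal_un[OF *(1)] a assms(3) * by metis
  then have "Succ T \<eta> \<in> I" using ideal_down[OF *(1), of "(Succ T \<eta> - E) \<union> E" "Succ T \<eta>"] by blast
  then show False using * by simp
qed

inductive Gx :: "'a list set \<Rightarrow> 'a tags \<Rightarrow> 'w set \<Rightarrow> ('a list \<times> 'w list) set \<Rightarrow> 'a list \<Rightarrow> 'w list \<Rightarrow> bool"
  for T Ib W Q where
  g1: "(\<eta>, s) \<notin> Q \<Longrightarrow> Gx T Ib W Q \<eta> s"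
| g2: "E \<in> snd (the (Ib \<eta>)) \<Longrightarrow> splitting T Ib \<eta> \<Longrightarrow>
      \<forall>\<eta>'\<in>Succ T \<eta> - E. \<forall>k\<in>W. Gx T Ib W Q \<eta>' (s @ [k]) \<Longrightarrow> Gx T Ib W Q \<eta> s"
| g3: "\<not> splitting T Ib \<eta> \<Longrightarrow>
      \<forall>\<eta>'\<in>Succ T \<eta>. \<forall>k\<in>W. Gx T Ib W Q \<eta>' (s @ [k]) \<Longrightarrow> Gx T Ib W Q \<eta> s"

definition okS :: "'a list set \<Rightarrow> 'a tags \<Rightarrow> ('a list \<Rightarrow> 'w list \<Rightarrow> 'a list set) \<Rightarrow> bool" where
  "okS T Ib \<sigma> \<longleftrightarrow> (\<forall>\<eta> s. splitting T Ib \<eta> \<longrightarrow> \<sigma> \<eta> s \<in> snd (the (Ib \<eta>)))"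

definition winS :: "'a list set \<Rightarrow> 'a tags \<Rightarrow> 'w set \<Rightarrow> ('a list \<times> 'w list) set
   \<Rightarrow> ('a list \<Rightarrow> 'w list \<Rightarrow> 'a list set) \<Rightarrow> 'a list \<Rightarrow> 'w list \<Rightarrow> bool" where
  "winS T Ib W Q \<sigma> \<eta> s \<longleftrightarrow> (\<forall>\<nu> w. \<nu> \<in> lim T \<longrightarrow> pre \<nu> (length \<eta>) = \<eta> \<longrightarrow>
     pre w (Suc (length \<eta>)) = s \<longrightarrow> (\<forall>n. w n \<in> W) \<longrightarrow>
     (\<forall>n\<ge>length \<eta>. splitting T Ib (pre \<nu> n) \<longrightarrow> pre \<nu> (Suc n) \<notin> \<sigma> (pre \<nu> n) (pre w (Suc n))) \<longrightarrow>
     (\<exists>n\<ge>length \<eta>. (pre \<nu> n, pre w (Suc n)) \<notin> Q))"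

lemma combine:
  assumes tt: "tagged_tree T Ib"
    and E1: "splitting T Ib \<eta> \<Longrightarrow> E \<in> snd (the (Ib \<eta>))"
    and E2: "\<not> splitting T Ib \<eta> \<Longrightarrow> E = {}"
    and IH: "\<forall>\<eta>'\<in>Succ T \<eta> - E. \<forall>k\<in>W. \<exists>\<sigma>. okS T Ib \<sigma> \<and> winS T Ib W Q \<sigma> \<eta>' (s @ [k])"
  shows "\<exists>\<sigma>. okS T Ib \<sigma> \<and> winS T Ib W Q \<sigma> \<eta> s"
proof -
  obtain sf where sf: "\<And>\<eta>' k. \<eta>'\<in>Succ T \<eta> - E \<Longrightarrow> k\<in>W \<Longrightarrow>
      okS T Ib (sf \<eta>' k) \<and> winS T Ib W Q (sf \<eta>' k) \<eta>' (s @ [k])"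
    using IH by metis
  define m where "m = length \<eta>"
  define \<sigma> where "\<sigma> \<mu> t = (if \<mu> = \<eta> then E else
     if m < length \<mu> \<and> take (Suc m) \<mu> \<in> Succ T \<eta> - E \<and> t ! Suc m \<in> W
     then sf (take (Suc m) \<mu>) (t ! Suc m) \<mu> t else {})" for \<mu> t
  have ok: "okS T Ib \<sigma>"
    unfolding okS_def
  proof (intro allI impI)
    fix \<mu> t assume sp: "splitting T Ib \<mu>"
    show "\<sigma> \<mu> t \<in> snd (the (Ib \<mu>))"
    proof (cases "\<mu> = \<eta>")
      case True then show ?thesis using E1 sp by (simp add: \<sigma>_def)
    next
      case False
      show ?thesis
      proof (cases "m < length \<mu> \<and> take (Suc m) \<mu> \<in> Succ T \<eta> - E \<and> t ! Suc m \<in> W")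
        case True
        then have "okS T Ib (sf (take (Suc m) \<mu>) (t ! Suc m))" using sf by blast
        then show ?thesis using True False sp unfolding \<sigma>_def okS_def by simp
      next
        case c: False
        have "\<sigma> \<mu> t = {}" using c False unfolding \<sigma>_def by auto
        then show ?thesis using split_empty[OF tt sp] by simp
      qed
    qed
  qed
  have win: "winS T Ib W Q \<sigma> \<eta> s"
    unfolding winS_def
  proof (intro allI impI)
    fix \<nu> w
    assume nu: "\<nu> \<in> lim T" and h1: "pre \<nu> (length \<eta>) = \<eta>" and h2: "pre w (Suc (length \<eta>)) = s"
      and W: "\<forall>n. w n \<in> W"
      and pl: "\<forall>n\<ge>length \<eta>. splitting T Ib (pre \<nu> n) \<longrightarrow> pre \<nu> (Suc n) \<notin> \<sigma> (pre \<nu> n) (pre w (Suc n))"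
    define \<eta>' where "\<eta>' = pre \<nu> (Suc m)"
    define k where "k = w (Suc m)"
    have "\<eta>' \<in> T" using nu unfolding lim_def \<eta>'_def by blast
    then have inS: "\<eta>' \<in> Succ T \<eta>" unfolding Succ_def \<eta>'_def using h1 m_def by auto
    have notE: "\<eta>' \<notin> E"
    proof (cases "splitting T Ib \<eta>")
      case True
      then have "\<eta>' \<notin> \<sigma> \<eta> (pre w (Suc m))" using pl h1 m_def \<eta>'_def by auto
      then show ?thesis by (simp add: \<sigma>_def)
    next
      case False then show ?thesis using E2 by simp
    qed
    have kW: "k \<in> W" using W k_def by simp
    have sw: "winS T Ib W Q (sf \<eta>' k) \<eta>' (s @ [k])" using sf inS notE kW by blast
    have len: "length \<eta>' = Suc m" by (simp add: \<eta>'_def)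
    have a1: "pre \<nu> (length \<eta>') = \<eta>'" by (simp add: \<eta>'_def)
    have a2: "pre w (Suc (length \<eta>')) = s @ [k]" using h2 len m_def k_def by simp
    have a3: "\<forall>n\<ge>length \<eta>'. splitting T Ib (pre \<nu> n) \<longrightarrow>
        pre \<nu> (Suc n) \<notin> sf \<eta>' k (pre \<nu> n) (pre w (Suc n))"
    proof (intro allI impI)
      fix n assume n: "length \<eta>' \<le> n" and sp: "splitting T Ib (pre \<nu> n)"
      have "pre \<nu> (Suc n) \<notin> \<sigma> (pre \<nu> n) (pre w (Suc n))" using pl n sp len m_def by auto
      moreover have "pre \<nu> n \<noteq> \<eta>" using n len m_def by auto
      moreover have "take (Suc m) (pre \<nu> n) = \<eta>'" using n len take_pre[of "Suc m" n \<nu>] \<eta>'_def by (simp del: upt_Suc)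
      moreover have "pre w (Suc n) ! Suc m = k" using n len k_def by (simp del: upt_Suc)
      ultimately show "pre \<nu> (Suc n) \<notin> sf \<eta>' k (pre \<nu> n) (pre w (Suc n))"
        using n len inS notE kW by (simp add: \<sigma>_def del: upt_Suc)
    qed
    obtain n where "n \<ge> length \<eta>'" "(pre \<nu> n, pre w (Suc n)) \<notin> Q"
      using sw nu a1 a2 W a3 unfolding winS_def by blast
    then show "\<exists>n\<ge>length \<eta>. (pre \<nu> n, pre w (Suc n)) \<notin> Q" using len m_def
      by (intro exI[of _ n]) auto
  qed
  show ?thesis using ok win by blast
qed

lemma Gx_win:
  assumes tt: "tagged_tree T Ib"
  shows "Gx T Ib W Q \<eta> s \<Longrightarrow> \<exists>\<sigma>. okS T Ib \<sigma> \<and> winS T Ib W Q \<sigma> \<eta> s"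
proof (induction rule: Gx.induct)
  case (g1 \<eta> s)
  have "okS T Ib (\<lambda>_ _. {})" unfolding okS_def using split_empty[OF tt] by blast
  moreover have "winS T Ib W Q (\<lambda>_ _. {}) \<eta> s"
    unfolding winS_def using g1 by (metis order_refl)
  ultimately show ?case by blast
next
  case (g2 E \<eta> s)
  show ?case by (rule combine[OF tt, of \<eta> E]) (use g2 in auto)
next
  case (g3 \<eta> s)
  show ?case by (rule combine[OF tt, of \<eta> "{}"]) (use g3 in auto)
qed




context includes cardinal_syntax
begin

lemma card_le_iff: "card_le A B \<longleftrightarrow> |A| \<le>o |B|"
  unfolding card_le_def card_of_ordLeq[symmetric] by blast

lemma card_le_image: "card_le A L \<Longrightarrow> card_le (g ` A) L"
  unfolding card_le_iff using card_of_image ordLeq_transitive by blast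

lemma card_le_subset: "card_le A L \<Longrightarrow> B \<subseteq> A \<Longrightarrow> card_le B L"
  unfolding card_le_iff using card_of_mono1 ordLeq_transitive by blast

lemma times_inj:
  assumes "infinite L"
  obtains k where "inj_on k (L \<times> L)" "k ` (L \<times> L) \<subseteq> L"
proof -
  have "L \<noteq> {}" using assms by auto
  then have "|L \<times> L| =o |L|" using card_of_Times_infinite[of L L] assms card_of_mono1[of L L] by blast
  then have "|L \<times> L| \<le>o |L|" using ordIso_imp_ordLeq by blast
  then show ?thesis using that card_of_ordLeq by metis
qed

lemma nat_inj:
  assumes "infinite L"
  obtains p :: "nat \<Rightarrow> 'i" where "inj p" "range p \<subseteq> L"
  using assms infinite_iff_card_of_nat card_of_ordLeq by metis

lemma lists_card:
  assumes inf: "infinite L" and W: "card_le W L"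
  shows "card_le (lists W) L"
proof -
  obtain f where f: "inj_on f W" "f ` W \<subseteq> L" using W unfolding card_le_def by blast
  obtain k where k: "inj_on k (L \<times> L)" "k ` (L \<times> L) \<subseteq> L" using times_inj[OF inf] by blast
  obtain p :: "nat \<Rightarrow> _" where p: "inj p" "range p \<subseteq> L" using nat_inj[OF inf] by blast
  obtain a0 where a0: "a0 \<in> L" using inf by (metis finite.emptyI ex_in_conv)
  define e where "e xs = foldr (\<lambda>x a. k (f x, a)) xs a0" for xs
  have eL: "xs \<in> lists W \<Longrightarrow> e xs \<in> L" for xs
    by (induction xs) (use f k a0 in \<open>auto simp: e_def\<close>)
  have einj: "xs \<in> lists W \<Longrightarrow> ys \<in> lists W \<Longrightarrow> length xs = length ys \<Longrightarrow> e xs = e ys \<Longrightarrow> xs = ys" for xs ys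
  proof (induction xs arbitrary: ys)
    case Nil then show ?case by simp
  next
    case (Cons x xs)
    then obtain y ys' where ys: "ys = y # ys'" by (cases ys) auto
    have "k (f x, e xs) = k (f y, e ys')" using Cons.prems ys by (simp add: e_def)
    moreover have "(f x, e xs) \<in> L \<times> L" "(f y, e ys') \<in> L \<times> L" using Cons.prems ys f eL by auto
    ultimately have "f x = f y" "e xs = e ys'" using k(1) unfolding inj_on_def by blast+
    then show ?case using Cons ys f(1) unfolding inj_on_def by auto
  qed
  define enc where "enc xs = k (p (length xs), e xs)" for xs
  have "inj_on enc (lists W)"
  proof (rule inj_onI)
    fix xs ys assume a: "xs \<in> lists W" "ys \<in> lists W" "enc xs = enc ys"
    then have "(p (length xs), e xs) = (p (length ys), e ys)"
      using k(1) p(2) eL unfolding inj_on_def enc_def by blast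
    then show "xs = ys" using einj a p(1) unfolding inj_def by auto
  qed
  moreover have "enc ` lists W \<subseteq> L" using k p eL unfolding enc_def by blast
  ultimately show ?thesis unfolding card_le_def by blast
qed

end

definition SA :: "'a list set \<Rightarrow> 'w set \<Rightarrow> ('a list \<times> 'w list) set \<Rightarrow> (nat \<Rightarrow> 'a) set" where
  "SA T W Q = {\<nu> \<in> lim T. \<exists>w. (\<forall>n. w n \<in> W) \<and> (\<forall>n. (pre \<nu> n, pre w (Suc n)) \<in> Q)}"

lemma lim_mono: "S \<subseteq> T \<Longrightarrow> lim S \<subseteq> lim T" unfolding lim_def by blast

lemma tagged_tree_is_tree: "tagged_tree T Ib \<Longrightarrow> is_tree T" unfolding tagged_tree_def by blast

lemma negative:
  assumes tt: "tagged_tree T Ib" and tc: "tagged_complete L T Ib" and inf: "infinite L"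
    and W: "card_le W L" and G: "\<forall>x\<in>W. Gx T Ib W Q [] [x]"
  shows "\<exists>S. is_tree S \<and> le_star T Ib S \<and> lim S \<inter> SA T W Q = {}"
proof -
  have tr: "is_tree T" using tt tagged_tree_is_tree by blast
  obtain \<sigma>x where sx: "\<And>x. x\<in>W \<Longrightarrow> okS T Ib (\<sigma>x x) \<and> winS T Ib W Q (\<sigma>x x) [] [x]"
  proof -
    have "\<forall>x\<in>W. \<exists>\<sigma>. okS T Ib \<sigma> \<and> winS T Ib W Q \<sigma> [] [x]" using G Gx_win[OF tt] by blast
    then show ?thesis using that by metis
  qed
  define \<sigma> where "\<sigma> \<mu> t = (if t \<noteq> [] \<and> hd t \<in> W then \<sigma>x (hd t) \<mu> t else {})" for \<mu> t
  define U where "U \<eta> = \<Union> ((\<lambda>t. \<sigma> \<eta> t) ` {t \<in> lists W. length t = Suc (length \<eta>)})" for \<eta>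
  have Usub: "t \<in> lists W \<Longrightarrow> length t = Suc (length \<eta>) \<Longrightarrow> \<sigma> \<eta> t \<subseteq> U \<eta>" for t \<eta>
    unfolding U_def by blast
  have Uin: "U \<eta> \<in> snd (the (Ib \<eta>))" if sp: "splitting T Ib \<eta>" for \<eta>
  proof -
    obtain D I where *: "Ib \<eta> = Some (D, I)" "snd (the (Ib \<eta>)) = I" "\<eta> \<in> T"
      using splittingD[OF tt sp] by metis
    have cp: "complete_plus L I" using tc * unfolding tagged_complete_def by blast
    have "(\<lambda>t. \<sigma> \<eta> t) ` {t \<in> lists W. length t = Suc (length \<eta>)} \<subseteq> I"
    proof
      fix A assume "A \<in> (\<lambda>t. \<sigma> \<eta> t) ` {t \<in> lists W. length t = Suc (length \<eta>)}"
      then obtain t where t: "t \<in> lists W" "A = \<sigma> \<eta> t" by blast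
      show "A \<in> I"
      proof (cases "t \<noteq> [] \<and> hd t \<in> W")
        case True
        then show ?thesis using sx[of "hd t"] sp t * unfolding okS_def \<sigma>_def by auto
      next
        case False
        then show ?thesis using split_empty[OF tt sp] t * unfolding \<sigma>_def by auto
      qed
    qed
    moreover have "card_le ((\<lambda>t. \<sigma> \<eta> t) ` {t \<in> lists W. length t = Suc (length \<eta>)}) L"
      by (rule card_le_image, rule card_le_subset[OF lists_card[OF inf W]]) blast
    ultimately show ?thesis using cp * unfolding complete_plus_def U_def by blast
  qed
  define S where "S = {\<eta>\<in>T. \<forall>n<length \<eta>. splitting T Ib (take n \<eta>) \<longrightarrow> take (Suc n) \<eta> \<notin> U (take n \<eta>)}"
  have ST: "S \<subseteq> T" unfolding S_def by blast
  have ext: "\<eta>' \<in> Succ S \<eta>" if h1: "\<eta> \<in> S" and h2: "\<eta>' \<in> Succ T \<eta>" and h3: "splitting T Ib \<eta> \<longrightarrow> \<eta>' \<notin> U \<eta>" for \<eta> \<eta>'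
  proof -
    obtain a where a: "\<eta>' = \<eta> @ [a]" "\<eta>' \<in> T" using h2 unfolding Succ_def by blast
    have "\<forall>n<length \<eta>'. splitting T Ib (take n \<eta>') \<longrightarrow> take (Suc n) \<eta>' \<notin> U (take n \<eta>')"
    proof (intro allI impI)
      fix n assume n: "n < length \<eta>'" and sp: "splitting T Ib (take n \<eta>')"
      show "take (Suc n) \<eta>' \<notin> U (take n \<eta>')"
      proof (cases "n < length \<eta>")
        case True
        then show ?thesis using h1 sp a unfolding S_def by auto
      next
        case False
        then have "n = length \<eta>" using n a by simp
        then show ?thesis using h3 sp a by simp
      qed
    qed
    then show ?thesis using a unfolding S_def Succ_def by blast
  qed
  have NilS: "[] \<in> S" using tree_Nil[OF tr] unfolding S_def by simp
  have exts: "\<exists>a. \<eta> @ [a] \<in> S" if eS: "\<eta> \<in> S" for \<eta>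
  proof -
    have eT: "\<eta> \<in> T" using eS ST by blast
    have "\<exists>\<eta>'. \<eta>' \<in> Succ T \<eta> \<and> (splitting T Ib \<eta> \<longrightarrow> \<eta>' \<notin> U \<eta>)"
    proof (cases "splitting T Ib \<eta>")
      case True
      then have "Succ T \<eta> - U \<eta> \<notin> snd (the (Ib \<eta>))" using split_pos[OF tt True Uin[OF True]] by blast
      then have "Succ T \<eta> - U \<eta> \<noteq> {}" using split_empty[OF tt True] by force
      then show ?thesis by blast
    next
      case False then show ?thesis using Succ_ne[OF tr eT] by blast
    qed
    then obtain \<eta>' where "\<eta>' \<in> Succ S \<eta>" using ext[OF eS] by blast
    then show ?thesis unfolding Succ_def by blast
  qed
  have treeS: "is_tree S"
    unfolding is_tree_def
  proof (intro conjI ballI allI)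
    show "S \<noteq> {}" using NilS by blast
  next
    fix \<eta> n assume eS: "\<eta> \<in> S"
    show "take n \<eta> \<in> S"
      using eS tree_take[OF tr] unfolding S_def by (auto simp: min_def)
  next
    fix \<eta> assume "\<eta> \<in> S" then show "\<exists>a. \<eta> @ [a] \<in> S" using exts by blast
  qed
  have les: "le_star T Ib S"
    unfolding le_star_def
  proof (intro conjI ballI impI)
    show "S \<subseteq> T" by (rule ST)
  next
    fix \<eta> assume eS: "\<eta> \<in> S" and sp: "splitting T Ib \<eta>"
    obtain D I where *: "is_ideal D I" "snd (the (Ib \<eta>)) = I"
      using splittingD[OF tt sp] by metis
    have "Succ T \<eta> - U \<eta> \<subseteq> Succ S \<eta>" using ext[OF eS] by blast
    moreover have "Succ T \<eta> - U \<eta> \<notin> I" using split_pos[OF tt sp Uin[OF sp]] * by simp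
    ultimately show "Succ S \<eta> \<notin> snd (the (Ib \<eta>))" using ideal_down[OF *(1)] * by blast
  qed
  have disj: "lim S \<inter> SA T W Q = {}"
  proof (rule ccontr)
    assume "lim S \<inter> SA T W Q \<noteq> {}"
    then obtain \<nu> w where nuS: "\<nu> \<in> lim S" and wW: "\<forall>n. w n \<in> W"
      and wQ: "\<forall>n. (pre \<nu> n, pre w (Suc n)) \<in> Q" unfolding SA_def by blast
    have nuT: "\<nu> \<in> lim T" using nuS lim_mono[OF ST] by blast
    define x where "x = w 0"
    have xW: "x \<in> W" using wW x_def by simp
    have win: "winS T Ib W Q (\<sigma>x x) [] [x]" using sx[OF xW] by blast
    have play: "\<forall>n\<ge>length ([]::'a list). splitting T Ib (pre \<nu> n) \<longrightarrow>
        pre \<nu> (Suc n) \<notin> \<sigma>x x (pre \<nu> n) (pre w (Suc n))"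
    proof (intro allI impI)
      fix n assume sp: "splitting T Ib (pre \<nu> n)"
      have "pre \<nu> (Suc n) \<in> S" using nuS unfolding lim_def by blast
      then have "take (Suc n) (pre \<nu> (Suc n)) \<notin> U (take n (pre \<nu> (Suc n)))"
        using sp take_pre[of n "Suc n" \<nu>] unfolding S_def by (auto simp del: upt_Suc)
      then have nU: "pre \<nu> (Suc n) \<notin> U (pre \<nu> n)" using take_pre[of n "Suc n" \<nu>] by (simp del: upt_Suc)
      have "pre w (Suc n) \<in> lists W" using wW by auto
      then have "\<sigma> (pre \<nu> n) (pre w (Suc n)) \<subseteq> U (pre \<nu> n)" using Usub by simp
      moreover have "\<sigma> (pre \<nu> n) (pre w (Suc n)) = \<sigma>x x (pre \<nu> n) (pre w (Suc n))"
        unfolding \<sigma>_def x_def using wW by (simp add: hd_map del: upt_Suc)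
      ultimately show "pre \<nu> (Suc n) \<notin> \<sigma>x x (pre \<nu> n) (pre w (Suc n))" using nU by auto
    qed
    have "\<exists>n\<ge>length ([]::'a list). (pre \<nu> n, pre w (Suc n)) \<notin> Q"
      using win nuT wW play unfolding winS_def x_def by simp
    then show False using wQ by blast
  qed
  show ?thesis using treeS les disj by blast
qed



primrec witf :: "('a list \<Rightarrow> 'w list \<Rightarrow> 'a list \<Rightarrow> 'w) \<Rightarrow> 'w \<Rightarrow> nat \<Rightarrow> 'a list \<Rightarrow> 'w list" where
  "witf K x0 0 \<eta> = [x0]"
| "witf K x0 (Suc n) \<eta> = witf K x0 n \<eta> @ [K (take n \<eta>) (witf K x0 n \<eta>) (take (Suc n) \<eta>)]"

lemma witf_len[simp]: "length (witf K x0 n \<eta>) = Suc n"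
  by (induction n) auto

lemma witf_take: "witf K x0 n \<eta> = witf K x0 n (take n \<eta>)"
proof (induction n arbitrary: \<eta>)
  case 0 then show ?case by simp
next
  case (Suc n)
  have "witf K x0 n (take (Suc n) \<eta>) = witf K x0 n (take n (take (Suc n) \<eta>))" using Suc by blast
  also have "\<dots> = witf K x0 n (take n \<eta>)" by (simp add: min_def)
  also have "\<dots> = witf K x0 n \<eta>" using Suc by simp
  finally show ?case by (simp add: min_def)
qed

lemma witf_take2: "n \<le> m \<Longrightarrow> witf K x0 n (take m \<eta>) = witf K x0 n \<eta>"
  by (metis min.absorb1 take_take witf_take)

lemma positive:
  assumes tt: "tagged_tree T Ib" and x0: "x0 \<in> W" and G: "\<not> Gx T Ib W Q [] [x0]"
  shows "\<exists>S. is_tree S \<and> le_star T Ib S \<and>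
     (\<forall>\<nu>\<in>lim S. \<exists>w. w 0 = x0 \<and> (\<forall>n. w n \<in> W) \<and> (\<forall>n. (pre \<nu> n, pre w (Suc n)) \<in> Q))"
proof -
  have tr: "is_tree T" using tt tagged_tree_is_tree by blast
  define Np where "Np \<eta> s \<longleftrightarrow> \<eta> \<in> T \<and> length s = Suc (length \<eta>) \<and> set s \<subseteq> W \<and> \<not> Gx T Ib W Q \<eta> s" for \<eta> s
  define X where "X \<eta> s = {\<eta>'\<in>Succ T \<eta>. \<exists>k\<in>W. \<not> Gx T Ib W Q \<eta>' (s @ [k])}" for \<eta> s
  have NQ: "Np \<eta> s \<Longrightarrow> (\<eta>, s) \<in> Q" for \<eta> s using Gx.g1 unfolding Np_def by blast
  have Nsp: "Np \<eta> s \<Longrightarrow> splitting T Ib \<eta> \<Longrightarrow> X \<eta> s \<notin> snd (the (Ib \<eta>))" for \<eta> s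
  proof
    assume a: "Np \<eta> s" "splitting T Ib \<eta>" "X \<eta> s \<in> snd (the (Ib \<eta>))"
    have "\<forall>\<eta>'\<in>Succ T \<eta> - X \<eta> s. \<forall>k\<in>W. Gx T Ib W Q \<eta>' (s @ [k])" unfolding X_def by blast
    then have "Gx T Ib W Q \<eta> s" using Gx.g2[OF a(3) a(2)] by blast
    then show False using a unfolding Np_def by blast
  qed
  have Nnsp: "Np \<eta> s \<Longrightarrow> \<not> splitting T Ib \<eta> \<Longrightarrow> X \<eta> s \<noteq> {}" for \<eta> s
  proof
    assume a: "Np \<eta> s" "\<not> splitting T Ib \<eta>" "X \<eta> s = {}"
    have "\<forall>\<eta>'\<in>Succ T \<eta>. \<forall>k\<in>W. Gx T Ib W Q \<eta>' (s @ [k])" using a(3) unfolding X_def by blast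
    then have "Gx T Ib W Q \<eta> s" using Gx.g3[OF a(2)] by blast
    then show False using a unfolding Np_def by blast
  qed
  define K where "K (\<eta>::'a list) s \<eta>' = (SOME k. k \<in> W \<and> \<not> Gx T Ib W Q \<eta>' (s @ [k]))" for \<eta> s \<eta>'
  define wf where "wf = witf K x0"
  define S where "S = {\<eta>. \<forall>n\<le>length \<eta>. Np (take n \<eta>) (wf n \<eta>)}"
  have ST: "S \<subseteq> T" unfolding S_def Np_def by auto
  have NilS: "[] \<in> S" using tree_Nil[OF tr] G x0 unfolding S_def Np_def wf_def by simp
  have ext: "\<eta>' \<in> Succ S \<eta>" if eS: "\<eta> \<in> S" and eX: "\<eta>' \<in> X \<eta> (wf (length \<eta>) \<eta>)" for \<eta> \<eta>'
  proof -
    define s where "s = wf (length \<eta>) \<eta>"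
    obtain a where a: "\<eta>' = \<eta> @ [a]" "\<eta>' \<in> T" using eX unfolding X_def Succ_def by blast
    have Ns: "Np \<eta> s" using eS unfolding S_def s_def by auto
    have ex: "\<exists>k. k \<in> W \<and> \<not> Gx T Ib W Q \<eta>' (s @ [k])" using eX unfolding X_def s_def by blast
    have Kp: "K \<eta> s \<eta>' \<in> W \<and> \<not> Gx T Ib W Q \<eta>' (s @ [K \<eta> s \<eta>'])"
      unfolding K_def using someI_ex[OF ex] .
    have tk: "take (length \<eta>) \<eta>' = \<eta>" using a by simp
    have "witf K x0 (length \<eta>) \<eta>' = witf K x0 (length \<eta>) (take (length \<eta>) \<eta>')" by (rule witf_take)
    then have w1: "wf (length \<eta>) \<eta>' = s" unfolding s_def wf_def using tk by simp
    have w2: "wf (Suc (length \<eta>)) \<eta>' = s @ [K \<eta> s \<eta>']"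
      using w1 tk a by (simp add: wf_def)
    have "\<forall>n\<le>length \<eta>'. Np (take n \<eta>') (wf n \<eta>')"
    proof (intro allI impI)
      fix n assume n: "n \<le> length \<eta>'"
      show "Np (take n \<eta>') (wf n \<eta>')"
      proof (cases "n \<le> length \<eta>")
        case True
        have "take n \<eta>' = take n \<eta>" using True a by simp
        moreover have "wf n \<eta>' = wf n \<eta>" unfolding wf_def
          using True a witf_take2[of n "length \<eta>" K x0 \<eta>'] by simp
        ultimately show ?thesis using eS True unfolding S_def by auto
      next
        case False
        then have nn: "n = Suc (length \<eta>)" using n a by simp
        have "set s \<subseteq> W" using Ns unfolding Np_def by blast
        then show ?thesis using nn w2 Kp a Ns unfolding Np_def by simp
      qed
    qed
    then show ?thesis using a unfolding S_def Succ_def by blast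
  qed
  have XS: "\<eta> \<in> S \<Longrightarrow> X \<eta> (wf (length \<eta>) \<eta>) \<subseteq> Succ S \<eta>" for \<eta> using ext by blast
  have NS: "\<eta> \<in> S \<Longrightarrow> Np \<eta> (wf (length \<eta>) \<eta>)" for \<eta> unfolding S_def by auto
  have exts: "\<exists>a. \<eta> @ [a] \<in> S" if eS: "\<eta> \<in> S" for \<eta>
  proof -
    have "X \<eta> (wf (length \<eta>) \<eta>) \<noteq> {}"
    proof (cases "splitting T Ib \<eta>")
      case True
      then show ?thesis using Nsp[OF NS[OF eS] True] split_empty[OF tt True] by force
    next
      case False then show ?thesis using Nnsp[OF NS[OF eS]] by blast
    qed
    then obtain \<eta>' where "\<eta>' \<in> Succ S \<eta>" using XS[OF eS] by blast
    then show ?thesis unfolding Succ_def by blast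
  qed
  have treeS: "is_tree S"
    unfolding is_tree_def
  proof (intro conjI ballI allI)
    show "S \<noteq> {}" using NilS by blast
  next
    fix \<eta> n assume eS: "\<eta> \<in> S"
    show "take n \<eta> \<in> S"
      unfolding S_def
    proof (intro allI impI CollectI)
      fix m assume m: "m \<le> length (take n \<eta>)"
      then have "m \<le> length \<eta>" "m \<le> n" by auto
      then have "Np (take m \<eta>) (wf m \<eta>)" using eS unfolding S_def by blast
      moreover have "take m (take n \<eta>) = take m \<eta>" using \<open>m \<le> n\<close> by (simp add: min_def)
      moreover have "wf m (take n \<eta>) = wf m \<eta>" unfolding wf_def using \<open>m \<le> n\<close> by (rule witf_take2)
      ultimately show "Np (take m (take n \<eta>)) (wf m (take n \<eta>))" by (simp only:)
    qed
  next
    fix \<eta> assume "\<eta> \<in> S" then show "\<exists>a. \<eta> @ [a] \<in> S" using exts by blast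
  qed
  have les: "le_star T Ib S"
    unfolding le_star_def
  proof (intro conjI ballI impI)
    show "S \<subseteq> T" by (rule ST)
  next
    fix \<eta> assume eS: "\<eta> \<in> S" and sp: "splitting T Ib \<eta>"
    obtain D I where *: "is_ideal D I" "snd (the (Ib \<eta>)) = I"
      using splittingD[OF tt sp] by metis
    show "Succ S \<eta> \<notin> snd (the (Ib \<eta>))"
      using Nsp[OF NS[OF eS] sp] XS[OF eS] ideal_down[OF *(1)] * by blast
  qed
  have limS: "\<exists>w. w 0 = x0 \<and> (\<forall>n. w n \<in> W) \<and> (\<forall>n. (pre \<nu> n, pre w (Suc n)) \<in> Q)"
    if nuS: "\<nu> \<in> lim S" for \<nu>
  proof -
    define wv where "wv n = wf n (pre \<nu> n)" for n
    define w where "w n = wv n ! n" for n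
    have pw: "pre w (Suc n) = wv n" for n
    proof (induction n)
      case 0 then show ?case by (simp add: w_def wv_def wf_def)
    next
      case (Suc n)
      have "wf n (pre \<nu> (Suc n)) = wf n (take n (pre \<nu> (Suc n)))" unfolding wf_def by (rule witf_take)
      also have "take n (pre \<nu> (Suc n)) = pre \<nu> n" by (rule take_pre) simp
      finally have e1: "wf n (pre \<nu> (Suc n)) = wv n" unfolding wv_def .
      have e2: "wv (Suc n) = wf n (pre \<nu> (Suc n)) @ [K (take n (pre \<nu> (Suc n))) (wf n (pre \<nu> (Suc n))) (take (Suc n) (pre \<nu> (Suc n)))]"
        unfolding wv_def wf_def by (simp only: witf.simps)
      have "length (wv n) = Suc n" unfolding wv_def wf_def by simp
      then have "wv (Suc n) = wv n @ [w (Suc n)]"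
        unfolding w_def using e1 e2 by (simp add: nth_append)
      then show ?case using Suc pre_Suc[of w "Suc n"] by (simp only:)
    qed
    have Nn: "Np (pre \<nu> n) (wv n)" for n
      using NS[of "pre \<nu> n"] nuS unfolding lim_def wv_def by simp
    have "w 0 = x0" by (simp add: w_def wv_def wf_def)
    moreover have "w n \<in> W" for n
    proof -
      have "w n \<in> set (wv n)" unfolding w_def using Nn[of n] unfolding Np_def by simp
      then show ?thesis using Nn[of n] unfolding Np_def by blast
    qed
    moreover have "(pre \<nu> n, pre w (Suc n)) \<in> Q" for n using NQ[OF Nn[of n]] pw by simp
    ultimately show ?thesis by blast
  qed
  show ?thesis using treeS les limS by blast
qed



definition susl :: "'a list set \<Rightarrow> (nat \<Rightarrow> 'a) set \<Rightarrow> bool" where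
  "susl T X \<longleftrightarrow> (\<exists>Q :: ('a list \<times> nat list) set. X = SA T UNIV Q)"

lemma susl_sub: "susl T X \<Longrightarrow> X \<subseteq> lim T"
  unfolding susl_def SA_def by blast

lemma SA_iff: "\<nu> \<in> SA T UNIV Q \<longleftrightarrow> \<nu> \<in> lim T \<and> (\<exists>w. \<forall>n. (pre \<nu> n, pre w (Suc n)) \<in> Q)"
  unfolding SA_def by simp

lemma open_mem: "(\<nu> \<in> (\<Union>\<eta>\<in>S0. basic_open T \<eta>)) \<longleftrightarrow> \<nu> \<in> lim T \<and> (\<exists>m. pre \<nu> m \<in> S0)"
proof
  assume "\<nu> \<in> (\<Union>\<eta>\<in>S0. basic_open T \<eta>)"
  then obtain \<eta> where e: "\<eta> \<in> S0" "\<nu> \<in> lim T" "pre \<nu> (length \<eta>) = \<eta>"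
    unfolding basic_open_def init_seg_def by blast
  then show "\<nu> \<in> lim T \<and> (\<exists>m. pre \<nu> m \<in> S0)" by (intro conjI exI[of _ "length \<eta>"]) simp_all
next
  assume a: "\<nu> \<in> lim T \<and> (\<exists>m. pre \<nu> m \<in> S0)"
  then obtain m where m: "pre \<nu> m \<in> S0" by blast
  have "pre \<nu> (length (pre \<nu> m)) = pre \<nu> m" by simp
  then have "\<nu> \<in> basic_open T (pre \<nu> m)" using a unfolding basic_open_def init_seg_def by blast
  then show "\<nu> \<in> (\<Union>\<eta>\<in>S0. basic_open T \<eta>)" using m by blast
qed

lemma susl_open: "susl T (\<Union>\<eta>\<in>S0. basic_open T \<eta>)"
proof -
  define Q where "Q = {(\<eta>, s::nat list). s \<noteq> [] \<longrightarrow> hd s \<le> length \<eta> \<longrightarrow> take (hd s) \<eta> \<in> S0}"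
  have "(\<Union>\<eta>\<in>S0. basic_open T \<eta>) = SA T UNIV Q"
  proof (rule set_eqI)
    fix \<nu>
    show "\<nu> \<in> (\<Union>\<eta>\<in>S0. basic_open T \<eta>) \<longleftrightarrow> \<nu> \<in> SA T UNIV Q"
      unfolding open_mem SA_iff
    proof (intro iffI conjI; (elim conjE exE)?)
      fix m assume "\<nu> \<in> lim T" "pre \<nu> m \<in> S0"
      then show "\<exists>w. \<forall>n. (pre \<nu> n, pre w (Suc n)) \<in> Q"
        unfolding Q_def by (intro exI[of _ "\<lambda>_. m"]) (auto simp: take_map min_def hd_map simp del: upt_Suc)
    next
      fix w assume a: "\<nu> \<in> lim T" "\<forall>n. (pre \<nu> n, pre w (Suc n)) \<in> Q"
      then have "(pre \<nu> (w 0), pre w (Suc (w 0))) \<in> Q" by blast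
      then have "pre \<nu> (w 0) \<in> S0" unfolding Q_def by (simp add: hd_map del: upt_Suc)
      then show "\<exists>m. pre \<nu> m \<in> S0" by blast
    qed auto
  qed
  then show ?thesis unfolding susl_def by blast
qed

lemma susl_open_compl: "susl T (lim T - (\<Union>\<eta>\<in>S0. basic_open T \<eta>))"
proof -
  define Q where "Q = {(\<eta>, s::nat list). \<forall>m\<le>length \<eta>. take m \<eta> \<notin> S0}"
  have "lim T - (\<Union>\<eta>\<in>S0. basic_open T \<eta>) = SA T UNIV Q"
  proof (rule set_eqI)
    fix \<nu>
    show "\<nu> \<in> lim T - (\<Union>\<eta>\<in>S0. basic_open T \<eta>) \<longleftrightarrow> \<nu> \<in> SA T UNIV Q"
      unfolding SA_iff Diff_iff open_mem
    proof (intro iffI conjI; (elim conjE exE)?)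
      assume a: "\<nu> \<in> lim T" "\<not> (\<nu> \<in> lim T \<and> (\<exists>m. pre \<nu> m \<in> S0))"
      then show "\<exists>w. \<forall>n. (pre \<nu> n, pre w (Suc n)) \<in> Q"
        unfolding Q_def by (auto simp: take_map min_def simp del: upt_Suc)
    next
      fix w assume a: "\<nu> \<in> lim T" "\<forall>n. (pre \<nu> n, pre w (Suc n)) \<in> Q"
      show "\<not> (\<nu> \<in> lim T \<and> (\<exists>m. pre \<nu> m \<in> S0))"
      proof
        assume "\<nu> \<in> lim T \<and> (\<exists>m. pre \<nu> m \<in> S0)"
        then obtain m where "pre \<nu> m \<in> S0" by blast
        moreover have "(pre \<nu> m, pre w (Suc m)) \<in> Q" using a by blast
        ultimately show False unfolding Q_def by auto
      qed
    qed auto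
  qed
  then show ?thesis unfolding susl_def by blast
qed

lemma susl_union:
  fixes A :: "nat \<Rightarrow> (nat \<Rightarrow> 'a) set"
  assumes "\<And>n. susl T (A n)"
  shows "susl T (\<Union>n. A n)"
proof -
  have "\<forall>n. \<exists>Q::(_ \<times> nat list) set. A n = SA T UNIV Q" using assms unfolding susl_def by blast
  then obtain Qf where Qf0: "\<forall>n. A n = SA T UNIV (Qf n :: (_ \<times> nat list) set)" by (metis choice)
  then have Qf: "\<And>n. A n = SA T UNIV (Qf n)" by blast
  define Q where "Q = {(\<eta>, s). s \<noteq> [] \<and> (\<forall>x\<in>set s. fst (prod_decode x) = fst (prod_decode (hd s)))
     \<and> (\<eta>, map (\<lambda>x. snd (prod_decode x)) s) \<in> Qf (fst (prod_decode (hd s)))}"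
  have "(\<Union>n. A n) = SA T UNIV Q"
  proof (rule set_eqI)
    fix \<nu>
    show "\<nu> \<in> (\<Union>n. A n) \<longleftrightarrow> \<nu> \<in> SA T UNIV Q"
    proof
      assume "\<nu> \<in> (\<Union>n. A n)"
      then obtain n where "\<nu> \<in> A n" by blast
      then obtain w where a: "\<nu> \<in> lim T" "\<forall>m. (pre \<nu> m, pre w (Suc m)) \<in> Qf n"
        unfolding Qf SA_iff by blast
      define w' where "w' k = prod_encode (n, w k)" for k
      have "\<forall>m. (pre \<nu> m, pre w' (Suc m)) \<in> Q"
      proof
        fix m
        have "map (\<lambda>x. snd (prod_decode x)) (pre w' (Suc m)) = pre w (Suc m)"
          unfolding w'_def by (simp del: upt_Suc)
        moreover have "fst (prod_decode (hd (pre w' (Suc m)))) = n"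
          unfolding w'_def by (simp add: hd_map del: upt_Suc)
        note e = calculation this
        have e3: "\<forall>x\<in>set (pre w' (Suc m)). fst (prod_decode x) = n" by (auto simp: w'_def simp del: upt_Suc)
        have e4: "(pre \<nu> m, map (\<lambda>x. snd (prod_decode x)) (pre w' (Suc m))) \<in> Qf n"
          by (subst e(1)) (use a in blast)
        show "(pre \<nu> m, pre w' (Suc m)) \<in> Q"
          unfolding Q_def mem_Collect_eq case_prod_conv e(2) using e3 e4 by (simp del: upt_Suc)
      qed
      then show "\<nu> \<in> SA T UNIV Q" using a unfolding SA_iff by blast
    next
      assume "\<nu> \<in> SA T UNIV Q"
      then obtain w where a: "\<nu> \<in> lim T" "\<forall>m. (pre \<nu> m, pre w (Suc m)) \<in> Q"
        unfolding SA_iff by blast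
      define n where "n = fst (prod_decode (w 0))"
      define w' where "w' k = snd (prod_decode (w k))" for k
      have "(pre \<nu> m, pre w' (Suc m)) \<in> Qf n" for m
      proof -
        have "(pre \<nu> m, pre w (Suc m)) \<in> Q" using a by blast
        then have q: "(pre \<nu> m, map (\<lambda>x. snd (prod_decode x)) (pre w (Suc m))) \<in> Qf (fst (prod_decode (hd (pre w (Suc m)))))"
          unfolding Q_def mem_Collect_eq case_prod_conv by blast
        have h: "hd (pre w (Suc m)) = w 0" by (simp add: hd_map del: upt_Suc)
        have mm: "map (\<lambda>x. snd (prod_decode x)) (pre w (Suc m)) = pre w' (Suc m)"
          unfolding w'_def by (simp del: upt_Suc)
        show ?thesis using q unfolding h mm n_def .
      qed
      then have "\<nu> \<in> A n" unfolding Qf SA_iff using a by blast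
      then show "\<nu> \<in> (\<Union>n. A n)" by blast
    qed
  qed
  then show ?thesis unfolding susl_def by blast
qed

lemma prod_encode_mono2: "i \<le> j \<Longrightarrow> prod_encode (n, i) \<le> prod_encode (n, j)"
proof (induction j rule: dec_induct)
  case base then show ?case by simp
next
  case (step j) then show ?case by (simp add: prod_encode_def)
qed

lemma susl_inter:
  fixes B :: "nat \<Rightarrow> (nat \<Rightarrow> 'a) set"
  assumes "\<And>n. susl T (B n)"
  shows "susl T (lim T \<inter> (\<Inter>n. B n))"
proof -
  have "\<forall>n. \<exists>Q::(_ \<times> nat list) set. B n = SA T UNIV Q" using assms unfolding susl_def by blast
  then obtain Qg where Qg0: "\<forall>n. B n = SA T UNIV (Qg n :: (_ \<times> nat list) set)" by (metis choice)
  then have Qg: "\<And>n. B n = SA T UNIV (Qg n)" by blast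
  define Q where "Q = {(\<eta>, s). \<forall>n j. j \<le> length \<eta> \<longrightarrow> prod_encode (n, j) < length s \<longrightarrow>
     (take j \<eta>, map (\<lambda>i. s ! prod_encode (n, i)) [0..<Suc j]) \<in> Qg n}"
  have "lim T \<inter> (\<Inter>n. B n) = SA T UNIV Q"
  proof (rule set_eqI)
    fix \<nu>
    show "\<nu> \<in> lim T \<inter> (\<Inter>n. B n) \<longleftrightarrow> \<nu> \<in> SA T UNIV Q"
    proof
      assume "\<nu> \<in> lim T \<inter> (\<Inter>n. B n)"
      then have nu: "\<nu> \<in> lim T" and "\<forall>n. \<exists>w. \<forall>m. (pre \<nu> m, pre w (Suc m)) \<in> Qg n"
        unfolding Qg using SA_iff by blast+
      then obtain wg where wg: "\<And>n m. (pre \<nu> m, pre (wg n) (Suc m)) \<in> Qg n" by metis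
      define w where "w k = wg (fst (prod_decode k)) (snd (prod_decode k))" for k
      have "(pre \<nu> m, pre w (Suc m)) \<in> Q" for m
        unfolding Q_def
      proof (clarsimp simp del: upt_Suc)
        fix n j assume j: "j \<le> m" and lt: "prod_encode (n, j) < Suc m"
        have "map (\<lambda>i. pre w (Suc m) ! prod_encode (n, i)) [0..<Suc j] = pre (wg n) (Suc j)"
        proof (rule map_cong[OF refl])
          fix i assume "i \<in> set [0..<Suc j]"
          then have "i \<le> j" by (simp del: upt_Suc)
          then have "prod_encode (n, i) < Suc m" using prod_encode_mono2 lt le_less_trans by blast
          then show "pre w (Suc m) ! prod_encode (n, i) = wg n i"
            by (simp add: w_def del: upt_Suc)
        qed
        moreover have "take j (pre \<nu> m) = pre \<nu> j" using j by (rule take_pre)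
        ultimately show "(take j (pre \<nu> m), map (\<lambda>i. pre w (Suc m) ! prod_encode (n, i)) [0..<Suc j]) \<in> Qg n"
          using wg[of j n] by (simp only:)
      qed
      then show "\<nu> \<in> SA T UNIV Q" using nu unfolding SA_iff by blast
    next
      assume "\<nu> \<in> SA T UNIV Q"
      then obtain w where nu: "\<nu> \<in> lim T" and a: "\<forall>m. (pre \<nu> m, pre w (Suc m)) \<in> Q"
        unfolding SA_iff by blast
      have "\<nu> \<in> B n" for n
      proof -
        define wn where "wn i = w (prod_encode (n, i))" for i
        have "(pre \<nu> j, pre wn (Suc j)) \<in> Qg n" for j
        proof -
          define m where "m = j + prod_encode (n, j)"
          have "(pre \<nu> m, pre w (Suc m)) \<in> Q" using a by blast
          then have "(take j (pre \<nu> m), map (\<lambda>i. pre w (Suc m) ! prod_encode (n, i)) [0..<Suc j]) \<in> Qg n"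
            unfolding Q_def m_def by (simp del: upt_Suc)
          moreover have "take j (pre \<nu> m) = pre \<nu> j" by (rule take_pre) (simp add: m_def)
          moreover have "map (\<lambda>i. pre w (Suc m) ! prod_encode (n, i)) [0..<Suc j] = pre wn (Suc j)"
          proof (rule map_cong[OF refl])
            fix i assume "i \<in> set [0..<Suc j]"
            then have "i \<le> j" by (simp del: upt_Suc)
            then have "prod_encode (n, i) < Suc m" using prod_encode_mono2[of i j n] unfolding m_def by simp
            then show "pre w (Suc m) ! prod_encode (n, i) = wn i"
              by (simp add: wn_def del: upt_Suc)
          qed
          ultimately show ?thesis by (simp only:)
        qed
        then show ?thesis unfolding Qg SA_iff using nu by blast
      qed
      then show "\<nu> \<in> lim T \<inter> (\<Inter>n. B n)" using nu by blast
    qed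
  qed
  then show ?thesis unfolding susl_def by blast
qed

lemma borel_susl:
  assumes "borel_lim T B"
  shows "susl T B \<and> susl T (lim T - B)"
proof -
  have "B \<in> sigma_sets (lim T) {U. open_lim T U}" using assms unfolding borel_lim_def .
  then show ?thesis
  proof (induction rule: sigma_sets.induct)
    case (Basic a)
    then obtain S0 where "a = (\<Union>\<eta>\<in>S0. basic_open T \<eta>)" unfolding open_lim_def by blast
    then show ?case using susl_open susl_open_compl by blast
  next
    case Empty
    have "{} = SA T UNIV {}" "lim T - {} = SA T UNIV UNIV" unfolding SA_def by auto
    then show ?case unfolding susl_def by blast
  next
    case (Compl a)
    have "lim T - (lim T - a) = a" using susl_sub[of T a] Compl by blast
    then show ?case using Compl by simp
  next
    case (Union a)
    have "lim T - (\<Union>i. a i) = lim T \<inter> (\<Inter>i. lim T - a i)" by blast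
    then show ?case using susl_union[of T a] susl_inter[of T "\<lambda>i. lim T - a i"] Union by simp
  qed
qed



lemma lim_ne:
  assumes "is_tree S"
  shows "\<exists>\<nu>. \<nu> \<in> lim S"
proof -
  define step where "step xs = xs @ [SOME a. xs @ [a] \<in> S]" for xs
  define f where "f n = (step ^^ n) []" for n
  have fS: "f n \<in> S \<and> length (f n) = n" for n
  proof (induction n)
    case 0 then show ?case using tree_Nil[OF assms] by (simp add: f_def)
  next
    case (Suc n)
    have ex: "\<exists>a. f n @ [a] \<in> S" using Suc assms unfolding is_tree_def by blast
    have "f (Suc n) = step (f n)" by (simp add: f_def)
    then show ?case using someI_ex[OF ex] Suc unfolding step_def by simp
  qed
  define \<nu> where "\<nu> n = f (Suc n) ! n" for n
  have "pre \<nu> n = f n" for n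
  proof (induction n)
    case 0 then show ?case using fS[of 0] by simp
  next
    case (Suc n)
    have fs: "f (Suc n) = f n @ [SOME a. f n @ [a] \<in> S]" by (simp add: f_def step_def)
    have "\<nu> n = (SOME a. f n @ [a] \<in> S)" unfolding \<nu>_def fs using fS[of n] by (simp add: nth_append)
    then show ?case using Suc fs pre_Suc[of \<nu> n] by (simp only:)
  qed
  then have "\<nu> \<in> lim S" unfolding lim_def using fS by simp
  then show ?thesis by blast
qed

lemma part1:
  fixes L :: "'i set" and T :: "'a list set" and Ib :: "'a tags" and B :: "'i \<Rightarrow> (nat \<Rightarrow> 'a) set"
  assumes inf: "infinite L" and tt: "tagged_tree T Ib" and tc: "tagged_complete L T Ib"
    and cov: "lim T = (\<Union>i\<in>L. B i)" and bor: "\<forall>i\<in>L. borel_lim T (B i)"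
  shows "\<exists>i\<in>L. \<exists>T'. is_tree T' \<and> le_star T Ib T' \<and> lim T' \<subseteq> B i"
proof -
  have "\<forall>i\<in>L. \<exists>Q::(_ \<times> nat list) set. B i = SA T UNIV Q"
    using bor borel_susl unfolding susl_def by blast
  then obtain Qf where Qf: "\<forall>i\<in>L. B i = SA T UNIV (Qf i :: (_ \<times> nat list) set)"
    by metis
  define W where "W = L \<times> (UNIV :: nat set)"
  define Q where "Q = {(\<eta>, s). s \<noteq> [] \<and> (\<forall>x\<in>set s. fst x = fst (hd s)) \<and> (\<eta>, map snd s) \<in> Qf (fst (hd s))}"
  have cW: "card_le W L"
  proof -
    obtain k where k: "inj_on k (L \<times> L)" "k ` (L \<times> L) \<subseteq> L" using times_inj[OF inf] by blast
    obtain p :: "nat \<Rightarrow> 'i" where p: "inj p" "range p \<subseteq> L" using nat_inj[OF inf] by blast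
    define g where "g x = k (fst x, p (snd x))" for x
    have "inj_on g W"
    proof (rule inj_onI)
      fix x y assume xy: "x \<in> W" "y \<in> W" "g x = g y"
      have "(fst x, p (snd x)) \<in> L \<times> L" "(fst y, p (snd y)) \<in> L \<times> L" using xy p unfolding W_def by auto
      then have "(fst x, p (snd x)) = (fst y, p (snd y))" using k(1) xy(3) unfolding g_def inj_on_def by blast
      then have "fst x = fst y" "snd x = snd y" using p(1) unfolding inj_def by auto
      then show "x = y" by (simp add: prod_eq_iff)
    qed
    moreover have "g ` W \<subseteq> L"
    proof
      fix z assume "z \<in> g ` W"
      then obtain x where x: "x \<in> W" "z = g x" by blast
      have "(fst x, p (snd x)) \<in> L \<times> L" using x p unfolding W_def by auto
      then show "z \<in> L" using k(2) x unfolding g_def by blast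
    qed
    ultimately show ?thesis unfolding card_le_def by blast
  qed
  show ?thesis
  proof (cases "\<exists>x0\<in>W. \<not> Gx T Ib W Q [] [x0]")
    case True
    then obtain x0 where x0: "x0 \<in> W" "\<not> Gx T Ib W Q [] [x0]" by blast
    obtain S where S: "is_tree S" "le_star T Ib S"
      "\<forall>\<nu>\<in>lim S. \<exists>w. w 0 = x0 \<and> (\<forall>n. w n \<in> W) \<and> (\<forall>n. (pre \<nu> n, pre w (Suc n)) \<in> Q)"
      using positive[OF tt x0] by blast
    define i where "i = fst x0"
    have iL: "i \<in> L" using x0 unfolding i_def W_def by auto
    have "lim S \<subseteq> B i"
    proof
      fix \<nu> assume nu: "\<nu> \<in> lim S"
      then obtain w where w: "w 0 = x0" "\<forall>n. (pre \<nu> n, pre w (Suc n)) \<in> Q" using S(3) by blast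
      have nuT: "\<nu> \<in> lim T" using nu lim_mono S(2) unfolding le_star_def by blast
      have "(pre \<nu> n, pre (snd \<circ> w) (Suc n)) \<in> Qf i" for n
      proof -
        have "(pre \<nu> n, pre w (Suc n)) \<in> Q" using w by blast
        moreover have "hd (pre w (Suc n)) = x0" using w by (simp add: hd_map del: upt_Suc)
        ultimately show ?thesis unfolding Q_def i_def by (simp del: upt_Suc)
      qed
      then have "\<nu> \<in> SA T UNIV (Qf i)" using nuT unfolding SA_iff by blast
      then show "\<nu> \<in> B i" using Qf iL by blast
    qed
    then show ?thesis using iL S by blast
  next
    case False
    then have G: "\<forall>x\<in>W. Gx T Ib W Q [] [x]" by blast
    obtain S where S: "is_tree S" "le_star T Ib S" "lim S \<inter> SA T W Q = {}"
      using negative[OF tt tc inf cW G] by blast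
    obtain \<nu> where nu: "\<nu> \<in> lim S" using lim_ne[OF S(1)] by blast
    have nuT: "\<nu> \<in> lim T" using nu lim_mono S(2) unfolding le_star_def by blast
    then obtain i where iL: "i \<in> L" and "\<nu> \<in> B i" using cov by blast
    then have "\<nu> \<in> SA T UNIV (Qf i)" using Qf by blast
    then obtain w where w: "\<forall>n. (pre \<nu> n, pre w (Suc n)) \<in> Qf i" unfolding SA_iff by blast
    define w' where "w' n = (i, w n)" for n
    have "(pre \<nu> n, pre w' (Suc n)) \<in> Q" for n
    proof -
      have mm: "map snd (pre w' (Suc n)) = pre w (Suc n)" unfolding w'_def by (simp del: upt_Suc)
      have hh: "fst (hd (pre w' (Suc n))) = i" unfolding w'_def by (simp add: hd_map del: upt_Suc)
      have al: "\<forall>x\<in>set (pre w' (Suc n)). fst x = fst (hd (pre w' (Suc n)))" unfolding hh unfolding w'_def by (auto simp del: upt_Suc)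
      have ne: "pre w' (Suc n) \<noteq> []" by (simp del: upt_Suc)
      have q: "(pre \<nu> n, map snd (pre w' (Suc n))) \<in> Qf (fst (hd (pre w' (Suc n))))"
        unfolding mm hh using w by blast
      show ?thesis unfolding Q_def mem_Collect_eq case_prod_conv using ne al q by blast
    qed
    moreover have "\<forall>n. w' n \<in> W" unfolding w'_def W_def using iL by simp
    ultimately have "\<nu> \<in> SA T W Q" using nuT unfolding SA_def by blast
    then show ?thesis using S(3) nu by blast
  qed
qed

theorem lemma1p7:
  fixes L :: "'i set" and T :: "'a list set" and Ib :: "'a tags"
  assumes "infinite L"
    and "tagged_tree T Ib"
    and "tagged_complete L T Ib"
  shows "(\<forall>B :: 'i \<Rightarrow> (nat \<Rightarrow> 'a) set.
            lim T = (\<Union>i\<in>L. B i) \<and> (\<forall>i\<in>L. borel_lim T (B i)) \<longrightarrow>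
            (\<exists>i\<in>L. \<exists>T'. is_tree T' \<and> le_star T Ib T' \<and> lim T' \<subseteq> B i))
       \<and> (\<forall>H :: (nat \<Rightarrow> 'a) \<Rightarrow> 'b.
            card_le (H ` lim T) L \<and> (\<forall>x. borel_lim T {\<nu> \<in> lim T. H \<nu> = x}) \<longrightarrow>
            (\<exists>T'. is_tree T' \<and> le_star T Ib T' \<and>
                  (\<exists>c. \<forall>\<nu>\<in>lim T'. H \<nu> = c)))"
proof (intro conjI allI impI)
  fix B :: "'i \<Rightarrow> (nat \<Rightarrow> 'a) set"
  assume "lim T = (\<Union>i\<in>L. B i) \<and> (\<forall>i\<in>L. borel_lim T (B i))"
  then show "\<exists>i\<in>L. \<exists>T'. is_tree T' \<and> le_star T Ib T' \<and> lim T' \<subseteq> B i"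
    using part1[OF assms] by blast
next
  fix H :: "(nat \<Rightarrow> 'a) \<Rightarrow> 'b"
  assume a: "card_le (H ` lim T) L \<and> (\<forall>x. borel_lim T {\<nu> \<in> lim T. H \<nu> = x})"
  then obtain f where f: "inj_on f (H ` lim T)" "f ` (H ` lim T) \<subseteq> L" unfolding card_le_def by blast
  define B where "B i = {\<nu> \<in> lim T. f (H \<nu>) = i}" for i
  have cov: "lim T = (\<Union>i\<in>L. B i)" unfolding B_def using f by blast
  have bor: "\<forall>i\<in>L. borel_lim T (B i)"
  proof
    fix i assume "i \<in> L"
    show "borel_lim T (B i)"
    proof (cases "\<exists>\<nu>0\<in>lim T. f (H \<nu>0) = i")
      case True
      then obtain \<nu>0 where n0: "\<nu>0 \<in> lim T" "f (H \<nu>0) = i" by blast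
      have "B i = {\<nu> \<in> lim T. H \<nu> = H \<nu>0}"
        unfolding B_def using n0 f(1) unfolding inj_on_def by (metis (mono_tags, lifting) image_eqI)
      then show ?thesis using a by simp
    next
      case False
      then have "B i = {}" unfolding B_def by blast
      then show ?thesis unfolding borel_lim_def by (simp add: sigma_sets.Empty)
    qed
  qed
  obtain i T' where T': "i \<in> L" "is_tree T'" "le_star T Ib T'" "lim T' \<subseteq> B i"
    using part1[OF assms cov bor] by blast
  have "\<exists>c. \<forall>\<nu>\<in>lim T'. H \<nu> = c"
  proof (cases "lim T' = {}")
    case True then show ?thesis by blast
  next
    case False
    then obtain \<nu>0 where n0: "\<nu>0 \<in> lim T'" by blast
    have "\<forall>\<nu>\<in>lim T'. H \<nu> = H \<nu>0"
    proof
      fix \<nu> assume "\<nu> \<in> lim T'"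
      then have "\<nu> \<in> B i" "\<nu>0 \<in> B i" using n0 T'(4) by auto
      then show "H \<nu> = H \<nu>0" using f(1) unfolding B_def inj_on_def by auto
    qed
    then show ?thesis by blast
  qed
  then show "\<exists>T'. is_tree T' \<and> le_star T Ib T' \<and> (\<exists>c. \<forall>\<nu>\<in>lim T'. H \<nu> = c)" using T' by blast
qed


end
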